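(* Let $D\le E$ be subgroups of a group $G$ with $E$ normal in $G$, and assume that the sandwich classification theorem holds for $L(D,E)$. Suppose further: (1) $D$ is generated by a union of finitely generated perfect subgroups; (2) for every $D$-full subgroup $F\le E$, the quotient group $N_E(F)/F$ is quasi-solvable. Then the sandwich classification theorem holds for $L(D,G)$, and the set of $D$-full subgroups of $G$ coincides with the set of $D$-full subgroups of $E$.
   Context: A group is perfect if it equals its commutator subgroup. A group is quasi-solvable if it is the union of an ascending chain of solvable subgroups. $X^Y$ denotes the subgroup generated by all $b^{-1}ab$, $a\in X$, $b\in Y$. $L(D,G)$ is the lattice of subgroups of $G$ containing $D$; $F\in L(D,G)$ is $D$-full if $D^F=F$. The lattice $L(D,G)$ satisfies the sandwich classification theorem if for every $H\in L(D,G)$ the subgroup $D^H$ is $D$-full and $H\le N_G(D^H)$ (equivalently, $L(D,G)$ is the union of the sets $\{H: F\le H\le N_G(F)\}$ over $D$-full $F$). *)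

theory Defs
  imports "HOL-Algebra.Algebra"
begin

definition conj_gen :: "('a, 'b) monoid_scheme \<Rightarrow> 'a set \<Rightarrow> 'a set \<Rightarrow> 'a set" where
  "conj_gen G A B = generate G {inv\<^bsub>G\<^esub> y \<otimes>\<^bsub>G\<^esub> x \<otimes>\<^bsub>G\<^esub> y | x y. x \<in> A \<and> y \<in> B}"

definition sub_lattice :: "('a, 'b) monoid_scheme \<Rightarrow> 'a set \<Rightarrow> 'a set \<Rightarrow> 'a set set" where
  "sub_lattice G D H = {K. subgroup K G \<and> D \<subseteq> K \<and> K \<subseteq> H}"

definition D_full :: "('a, 'b) monoid_scheme \<Rightarrow> 'a set \<Rightarrow> 'a set \<Rightarrow> 'a set \<Rightarrow> bool" where
  "D_full G D H F \<longleftrightarrow> F \<in> sub_lattice G D H \<and> conj_gen G D F = F"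

definition normaliser_in :: "('a, 'b) monoid_scheme \<Rightarrow> 'a set \<Rightarrow> 'a set \<Rightarrow> 'a set" where
  "normaliser_in G H F = {h \<in> H \<inter> carrier G. h <#\<^bsub>G\<^esub> F #>\<^bsub>G\<^esub> inv\<^bsub>G\<^esub> h = F}"

definition sandwich_classification :: "('a, 'b) monoid_scheme \<Rightarrow> 'a set \<Rightarrow> 'a set \<Rightarrow> bool" where
  "sandwich_classification G D H \<longleftrightarrow>
     (\<forall>K \<in> sub_lattice G D H. D_full G D H (conj_gen G D K) \<and> K \<subseteq> normaliser_in G H (conj_gen G D K))"

definition perfect_subgroup :: "('a, 'b) monoid_scheme \<Rightarrow> 'a set \<Rightarrow> bool" where
  "perfect_subgroup G P \<longleftrightarrow> subgroup P G \<and> derived G P = P"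

definition fin_gen_subgroup :: "('a, 'b) monoid_scheme \<Rightarrow> 'a set \<Rightarrow> bool" where
  "fin_gen_subgroup G P \<longleftrightarrow> subgroup P G \<and> (\<exists>S. finite S \<and> S \<subseteq> P \<and> generate G S = P)"

definition quasi_solvable :: "('a, 'b) monoid_scheme \<Rightarrow> bool" where
  "quasi_solvable Q \<longleftrightarrow> (\<exists>C. C \<noteq> {} \<and> Ball C (\<lambda>S. subgroup S Q \<and> solvable (Q\<lparr>carrier := S\<rparr>))
        \<and> (\<forall>S\<in>C. \<forall>T\<in>C. S \<subseteq> T \<or> T \<subseteq> S) \<and> \<Union>C = carrier Q)"

end

theory Submission
  imports Defs
begin


lemma chain_finite_bound:
  assumes "finite A" "C \<noteq> {}" "\<forall>S\<in>C. \<forall>T\<in>C. S \<subseteq> T \<or> T \<subseteq> S" "A \<subseteq> \<Union>C"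
  shows "\<exists>T\<in>C. A \<subseteq> T"
  using assms
proof (induction A rule: finite_induct)
  case empty then show ?case by blast
next
  case (insert x A)
  then obtain T where T: "T \<in> C" "A \<subseteq> T" by auto
  from insert obtain T' where T': "T' \<in> C" "x \<in> T'" by auto
  from insert.prems(2) T T' have "T \<subseteq> T' \<or> T' \<subseteq> T" by blast
  then show ?case using T T' by blast
qed

lemma perfect_to_quasi_solvable_trivial:
  assumes G: "group G" and Q: "group Q" and qs: "quasi_solvable Q"
    and perf: "perfect_subgroup G P" and fg: "fin_gen_subgroup G P"
    and f: "f \<in> hom (G\<lparr>carrier := P\<rparr>) Q"
    and x: "x \<in> P"
  shows "f x = \<one>\<^bsub>Q\<^esub>"
proof -
  interpret G: group G by fact
  interpret Q: group Q by fact
  have sP: "subgroup P G" and dP: "derived G P = P" using perf by (auto simp: perfect_subgroup_def)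
  obtain S where S: "finite S" "S \<subseteq> P" "generate G S = P" using fg by (auto simp: fin_gen_subgroup_def)
  define G' where "G' = G\<lparr>carrier := P\<rparr>"
  interpret G': group G' unfolding G'_def by (rule G.subgroup_imp_group[OF sP])
  have fG': "f \<in> hom G' Q" using f unfolding G'_def .
  have hG': "group_hom G' Q f"
    unfolding group_hom_def group_hom_axioms_def using G'.is_group Q.is_group fG' by blast
  obtain C where C: "C \<noteq> {}" "\<forall>S\<in>C. subgroup S Q \<and> solvable (Q\<lparr>carrier := S\<rparr>)"
    "\<forall>S\<in>C. \<forall>T\<in>C. S \<subseteq> T \<or> T \<subseteq> S" "\<Union>C = carrier Q"
    using qs unfolding quasi_solvable_def by (elim exE conjE) (rule that; assumption)
  have fS: "f ` S \<subseteq> \<Union>C" using S(2) fG' C(4) unfolding G'_def hom_def by auto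
  obtain T where T: "T \<in> C" "f ` S \<subseteq> T"
    using chain_finite_bound[OF finite_imageI[OF S(1)] C(1) C(3) fS] by blast
  have sT: "subgroup T Q" and solT: "solvable (Q\<lparr>carrier := T\<rparr>)" using C(2) T(1) by auto
  have genG': "generate G' S = P" using G.generate_consistent[OF S(2) sP] S(3) unfolding G'_def by simp
  have SG': "S \<subseteq> carrier G'" using S(2) unfolding G'_def by simp
  have "f ` P = generate Q (f ` S)" using group_hom.generate_img[OF hG' SG'] genG' by simp
  also have "\<dots> \<subseteq> T" using Q.generate_subgroup_incl[OF T(2) sT] .
  finally have fPT: "f ` P \<subseteq> T" .
  define QT where "QT = Q\<lparr>carrier := T\<rparr>"
  interpret QT: group QT unfolding QT_def by (rule Q.subgroup_imp_group[OF sT])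
  have fQT: "f \<in> hom G' QT" using fG' fPT unfolding hom_def G'_def QT_def by (auto simp: Pi_iff)
  have h2: "group_hom G' QT f"
    unfolding group_hom_def group_hom_axioms_def using G'.is_group QT.is_group fQT by blast
  have cG': "carrier G' = P" unfolding G'_def by simp
  have dG': "derived G' P = P" using G.derived_consistent[OF order_refl sP] dP unfolding G'_def by simp
  have iter: "(derived G' ^^ n) P = P" for n by (induction n) (simp_all add: dG')
  have "subgroup (f ` P) QT" using group_hom.subgroup_img_is_subgroup[OF h2 G'.subgroup_self] cG' by simp
  then have "solvable_seq QT (f ` P)" using QT.solvable_subgroup solT unfolding QT_def by blast
  then obtain n where "(derived QT ^^ n) (f ` P) = {\<one>\<^bsub>QT\<^esub>}"
    using QT.solvable_imp_trivial_derived_seq by blast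
  moreover have "(derived QT ^^ n) (f ` P) = f ` P"
    using group_hom.exp_of_derived_img[OF h2, of P n] cG' iter by simp
  ultimately have "f ` P = {\<one>\<^bsub>Q\<^esub>}" unfolding QT_def by simp
  then show ?thesis using x by auto
qed



lemma (in group) cancel_l1 [simp]: "h \<in> carrier G \<Longrightarrow> x \<in> carrier G \<Longrightarrow> inv h \<otimes> (h \<otimes> x) = x"
  by (simp add: m_assoc[symmetric])
lemma (in group) cancel_l2 [simp]: "h \<in> carrier G \<Longrightarrow> x \<in> carrier G \<Longrightarrow> h \<otimes> (inv h \<otimes> x) = x"
  by (simp add: m_assoc[symmetric])

lemma (in group) conj_m1:
  "a \<in> carrier G \<Longrightarrow> b \<in> carrier G \<Longrightarrow> x \<in> carrier G \<Longrightarrow>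
   (a \<otimes> b) \<otimes> x \<otimes> inv (a \<otimes> b) = a \<otimes> (b \<otimes> x \<otimes> inv b) \<otimes> inv a"
  by (simp add: inv_mult_group m_assoc)
lemma (in group) conj_m2:
  "a \<in> carrier G \<Longrightarrow> b \<in> carrier G \<Longrightarrow> x \<in> carrier G \<Longrightarrow>
   inv (a \<otimes> b) \<otimes> x \<otimes> (a \<otimes> b) = inv b \<otimes> (inv a \<otimes> x \<otimes> a) \<otimes> b"
  by (simp add: inv_mult_group m_assoc)

lemma conj_alg:
  assumes "group G" "h \<in> carrier G" "k \<in> carrier G" "d \<in> carrier G"
  shows "inv\<^bsub>G\<^esub> (h \<otimes>\<^bsub>G\<^esub> k \<otimes>\<^bsub>G\<^esub> inv\<^bsub>G\<^esub> h) \<otimes>\<^bsub>G\<^esub> (h \<otimes>\<^bsub>G\<^esub> d \<otimes>\<^bsub>G\<^esub> inv\<^bsub>G\<^esub> h) \<otimes>\<^bsub>G\<^esub> (h \<otimes>\<^bsub>G\<^esub> k \<otimes>\<^bsub>G\<^esub> inv\<^bsub>G\<^esub> h)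
       = h \<otimes>\<^bsub>G\<^esub> (inv\<^bsub>G\<^esub> k \<otimes>\<^bsub>G\<^esub> d \<otimes>\<^bsub>G\<^esub> k) \<otimes>\<^bsub>G\<^esub> inv\<^bsub>G\<^esub> h"
proof -
  interpret group G by fact
  show ?thesis using assms(2-4) by (simp add: inv_mult_group m_assoc)
qed

lemma conj_mult_alg:
  assumes "group G" "h \<in> carrier G" "a \<in> carrier G" "b \<in> carrier G"
  shows "h \<otimes>\<^bsub>G\<^esub> (a \<otimes>\<^bsub>G\<^esub> b) \<otimes>\<^bsub>G\<^esub> inv\<^bsub>G\<^esub> h
       = (h \<otimes>\<^bsub>G\<^esub> a \<otimes>\<^bsub>G\<^esub> inv\<^bsub>G\<^esub> h) \<otimes>\<^bsub>G\<^esub> (h \<otimes>\<^bsub>G\<^esub> b \<otimes>\<^bsub>G\<^esub> inv\<^bsub>G\<^esub> h)"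
proof -
  interpret group G by fact
  show ?thesis using assms(2-4) by (simp add: m_assoc)
qed

lemma conj_inv_alg:
  assumes "group G" "h \<in> carrier G" "a \<in> carrier G"
  shows "h \<otimes>\<^bsub>G\<^esub> inv\<^bsub>G\<^esub> a \<otimes>\<^bsub>G\<^esub> inv\<^bsub>G\<^esub> h = inv\<^bsub>G\<^esub> (h \<otimes>\<^bsub>G\<^esub> a \<otimes>\<^bsub>G\<^esub> inv\<^bsub>G\<^esub> h)"
proof -
  interpret group G by fact
  show ?thesis using assms(2-3) by (simp add: inv_mult_group m_assoc)
qed


lemma (in group) conj_set:
  assumes "F \<subseteq> carrier G" "n \<in> carrier G"
  shows "n <# F #> inv n = (\<lambda>x. n \<otimes> x \<otimes> inv n) ` F"
  unfolding l_coset_def r_coset_def by auto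

lemma (in group) norm_iff:
  assumes F: "F \<subseteq> carrier G" and n: "n \<in> carrier G"
  shows "(n <# F #> inv n = F) \<longleftrightarrow>
     (\<forall>x\<in>F. n \<otimes> x \<otimes> inv n \<in> F) \<and> (\<forall>x\<in>F. inv n \<otimes> x \<otimes> n \<in> F)"
proof -
  have eq: "n <# F #> inv n = (\<lambda>x. n \<otimes> x \<otimes> inv n) ` F" by (rule conj_set[OF F n])
  show ?thesis
  proof
    assume A: "n <# F #> inv n = F"
    have eq2: "(\<lambda>x. n \<otimes> x \<otimes> inv n) ` F = F" using A unfolding eq .
    show "(\<forall>x\<in>F. n \<otimes> x \<otimes> inv n \<in> F) \<and> (\<forall>x\<in>F. inv n \<otimes> x \<otimes> n \<in> F)"
    proof (intro conjI ballI)
      fix x assume x: "x \<in> F"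
      have "n \<otimes> x \<otimes> inv n \<in> (\<lambda>x. n \<otimes> x \<otimes> inv n) ` F" using x by (rule imageI)
      then show "n \<otimes> x \<otimes> inv n \<in> F" unfolding eq2 .
    next
      fix x assume x: "x \<in> F"
      then have "x \<in> (\<lambda>x. n \<otimes> x \<otimes> inv n) ` F" unfolding eq2 .
      then obtain y where y: "y \<in> F" "x = n \<otimes> y \<otimes> inv n" by (rule imageE)
      have yc: "y \<in> carrier G" using y(1) F by (rule subsetD[rotated])
      have "inv n \<otimes> x \<otimes> n = y" unfolding y(2) using yc n by (simp add: m_assoc)
      then show "inv n \<otimes> x \<otimes> n \<in> F" using y(1) by simp
    qed
  next
    assume B: "(\<forall>x\<in>F. n \<otimes> x \<otimes> inv n \<in> F) \<and> (\<forall>x\<in>F. inv n \<otimes> x \<otimes> n \<in> F)"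
    have B1: "\<And>x. x \<in> F \<Longrightarrow> n \<otimes> x \<otimes> inv n \<in> F" using B by simp
    have B2: "\<And>x. x \<in> F \<Longrightarrow> inv n \<otimes> x \<otimes> n \<in> F" using B by simp
    show "n <# F #> inv n = F"
      unfolding eq
    proof
      show "(\<lambda>x. n \<otimes> x \<otimes> inv n) ` F \<subseteq> F" using B1 by (simp add: image_subset_iff)
    next
      show "F \<subseteq> (\<lambda>x. n \<otimes> x \<otimes> inv n) ` F"
      proof
        fix x assume x: "x \<in> F"
        have xc: "x \<in> carrier G" using x F by (rule subsetD[rotated])
        have "x = n \<otimes> (inv n \<otimes> x \<otimes> n) \<otimes> inv n" using xc n by (simp add: m_assoc)
        then show "x \<in> (\<lambda>x. n \<otimes> x \<otimes> inv n) ` F" using B2[OF x] by (rule image_eqI)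
      qed
    qed
  qed
qed

lemma (in group) conj_generate:
  assumes S: "S \<subseteq> carrier G" and g: "g \<in> carrier G" and sF: "subgroup F G"
    and hyp: "\<And>x. x \<in> S \<Longrightarrow> g \<otimes> x \<otimes> inv g \<in> F"
    and x: "x \<in> generate G S"
  shows "g \<otimes> x \<otimes> inv g \<in> F"
  using x
proof (induction rule: generate.induct)
  case one
  show ?case using g subgroup.one_closed[OF sF] by simp
next
  case (incl h) then show ?case using hyp by blast
next
  case (inv h)
  have hc: "h \<in> carrier G" using inv S by auto
  show ?case using conj_inv_alg[OF is_group g hc] subgroup.m_inv_closed[OF sF hyp[OF inv]] by simp
next
  case (eng h1 h2)
  have "h1 \<in> carrier G" "h2 \<in> carrier G" using eng(1,2) generate_in_carrier[OF S] by auto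
  then show ?case using conj_mult_alg[OF is_group g] subgroup.m_closed[OF sF eng(3,4)] by simp
qed

theorem lemma2p5:
  fixes G :: "('a, 'b) monoid_scheme" and D E :: "'a set"
  assumes "group G"
    and "subgroup D G" and "D \<subseteq> E" and "E \<lhd> G"
    and "sandwich_classification G D E"
    and "\<exists>\<P>. (\<forall>P\<in>\<P>. perfect_subgroup G P \<and> fin_gen_subgroup G P) \<and> D = generate G (\<Union>\<P>)"
    and "\<And>F. D_full G D E F \<Longrightarrow>
           quasi_solvable ((G\<lparr>carrier := normaliser_in G E F\<rparr>) Mod F)"
  shows "sandwich_classification G D (carrier G)
         \<and> {F. D_full G D (carrier G) F} = {F. D_full G D E F}"
proof -
  interpret G: group G by fact
  have sE: "subgroup E G" using assms(4) by (rule normal_imp_subgroup)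
  have Ecar: "E \<subseteq> carrier G" using subgroup.subset[OF sE] .
  have Dcar: "D \<subseteq> carrier G" using subgroup.subset[OF assms(2)] .
  have conjE: "\<And>g x. g \<in> carrier G \<Longrightarrow> x \<in> E \<Longrightarrow> g \<otimes>\<^bsub>G\<^esub> x \<otimes>\<^bsub>G\<^esub> inv\<^bsub>G\<^esub> g \<in> E"
    by (rule normal.inv_op_closed2[OF assms(4)])
  have conjE': "\<And>g x. g \<in> carrier G \<Longrightarrow> x \<in> E \<Longrightarrow> inv\<^bsub>G\<^esub> g \<otimes>\<^bsub>G\<^esub> x \<otimes>\<^bsub>G\<^esub> g \<in> E"
    by (rule normal.inv_op_closed1[OF assms(4)])
  obtain PP where PP0: "(\<forall>P\<in>PP. perfect_subgroup G P \<and> fin_gen_subgroup G P) \<and> D = generate G (\<Union>PP)"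
    using assms(6) by (rule exE)
  have PP: "\<forall>P\<in>PP. perfect_subgroup G P \<and> fin_gen_subgroup G P" "D = generate G (\<Union>PP)"
    using PP0 by (rule conjunct1, rule conjunct2)
  have UPcar: "\<Union>PP \<subseteq> carrier G"
  proof
    fix x assume "x \<in> \<Union>PP"
    then obtain P where "P \<in> PP" "x \<in> P" by blast
    then show "x \<in> carrier G" using PP(1) subgroup.subset unfolding perfect_subgroup_def by blast
  qed
  have full_mono: "\<And>Z. D_full G D E Z \<Longrightarrow> D_full G D (carrier G) Z"
    unfolding D_full_def sub_lattice_def using Ecar by blast
  have full_E: "\<And>Z. D_full G D (carrier G) Z \<Longrightarrow> Z \<subseteq> E"
  proof -
    fix Z assume Z: "D_full G D (carrier G) Z"
    have Zcar: "Z \<subseteq> carrier G" using Z unfolding D_full_def sub_lattice_def by blast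
    have "conj_gen G D Z \<subseteq> E" unfolding conj_gen_def
      by (rule G.generate_subgroup_incl[OF _ sE]) (use Zcar assms(3) conjE' in blast)
    then show "Z \<subseteq> E" using Z unfolding D_full_def by simp
  qed
  have key: "D_full G D E (conj_gen G D H) \<and> H \<subseteq> normaliser_in G (carrier G) (conj_gen G D H)"
    if H: "H \<in> sub_lattice G D (carrier G)" for H
  proof -
    have sH: "subgroup H G" and DH: "D \<subseteq> H" using H unfolding sub_lattice_def by auto
    have Hcar: "H \<subseteq> carrier G" using subgroup.subset[OF sH] .
    define K where "K = H \<inter> E"
    have sK: "subgroup K G" unfolding K_def using G.subgroups_Inter_pair[OF sH sE] .
    have Kcar: "K \<subseteq> carrier G" using subgroup.subset[OF sK] .
    have KL: "K \<in> sub_lattice G D E" unfolding sub_lattice_def K_def using sK[unfolded K_def] DH assms(3) by blast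
    define F where "F = conj_gen G D K"
    have FD: "D_full G D E F" and KN: "K \<subseteq> normaliser_in G E F"
      using assms(5) KL unfolding sandwich_classification_def F_def by blast+
    have sF: "subgroup F G" and DF: "D \<subseteq> F" and FE: "F \<subseteq> E"
      using FD unfolding D_full_def sub_lattice_def by auto
    have Fcar: "F \<subseteq> carrier G" using subgroup.subset[OF sF] .
    define N where "N = normaliser_in G E F"
    have Nchar: "n \<in> N \<longleftrightarrow> n \<in> E \<and> n \<in> carrier G \<and> (\<forall>x\<in>F. n \<otimes>\<^bsub>G\<^esub> x \<otimes>\<^bsub>G\<^esub> inv\<^bsub>G\<^esub> n \<in> F)
        \<and> (\<forall>x\<in>F. inv\<^bsub>G\<^esub> n \<otimes>\<^bsub>G\<^esub> x \<otimes>\<^bsub>G\<^esub> n \<in> F)" for n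
      unfolding N_def normaliser_in_def using G.norm_iff[OF Fcar, of n] by auto
    have NE: "\<And>n. n \<in> N \<Longrightarrow> n \<in> E" using Nchar by simp
    have Nc: "\<And>n. n \<in> N \<Longrightarrow> n \<in> carrier G" using Nchar by simp
    have N1: "\<And>n x. n \<in> N \<Longrightarrow> x \<in> F \<Longrightarrow> n \<otimes>\<^bsub>G\<^esub> x \<otimes>\<^bsub>G\<^esub> inv\<^bsub>G\<^esub> n \<in> F" using Nchar by simp
    have N2: "\<And>n x. n \<in> N \<Longrightarrow> x \<in> F \<Longrightarrow> inv\<^bsub>G\<^esub> n \<otimes>\<^bsub>G\<^esub> x \<otimes>\<^bsub>G\<^esub> n \<in> F" using Nchar by simp
    have NI: "\<And>n. n \<in> E \<Longrightarrow> n \<in> carrier G \<Longrightarrow> (\<And>x. x \<in> F \<Longrightarrow> n \<otimes>\<^bsub>G\<^esub> x \<otimes>\<^bsub>G\<^esub> inv\<^bsub>G\<^esub> n \<in> F)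
        \<Longrightarrow> (\<And>x. x \<in> F \<Longrightarrow> inv\<^bsub>G\<^esub> n \<otimes>\<^bsub>G\<^esub> x \<otimes>\<^bsub>G\<^esub> n \<in> F) \<Longrightarrow> n \<in> N"
      using Nchar by simp
    have KN': "\<And>k. k \<in> K \<Longrightarrow> k \<in> N" using KN unfolding N_def by auto
    have sN: "subgroup N G"
    proof (rule subgroup.intro)
      show "N \<subseteq> carrier G" using Nc by auto
    next
      fix a b assume a: "a \<in> N" and b: "b \<in> N"
      have ac: "a \<in> carrier G" and bc: "b \<in> carrier G" using Nc a b by auto
      show "a \<otimes>\<^bsub>G\<^esub> b \<in> N"
      proof (rule NI)
        show "a \<otimes>\<^bsub>G\<^esub> b \<in> E" using subgroup.m_closed[OF sE NE[OF a] NE[OF b]] .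
        show "a \<otimes>\<^bsub>G\<^esub> b \<in> carrier G" using ac bc by simp
        fix x assume x: "x \<in> F"
        have xc: "x \<in> carrier G" using x Fcar by auto
        show "(a \<otimes>\<^bsub>G\<^esub> b) \<otimes>\<^bsub>G\<^esub> x \<otimes>\<^bsub>G\<^esub> inv\<^bsub>G\<^esub> (a \<otimes>\<^bsub>G\<^esub> b) \<in> F"
          using G.conj_m1[OF ac bc xc] N1[OF a N1[OF b x]] by simp
        show "inv\<^bsub>G\<^esub> (a \<otimes>\<^bsub>G\<^esub> b) \<otimes>\<^bsub>G\<^esub> x \<otimes>\<^bsub>G\<^esub> (a \<otimes>\<^bsub>G\<^esub> b) \<in> F"
          using G.conj_m2[OF ac bc xc] N2[OF b N2[OF a x]] by simp
      qed
    next
      show "\<one>\<^bsub>G\<^esub> \<in> N"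
      proof (rule NI)
        show "\<one>\<^bsub>G\<^esub> \<in> E" using subgroup.one_closed[OF sE] .
        show "\<one>\<^bsub>G\<^esub> \<in> carrier G" by simp
        fix x assume x: "x \<in> F"
        have xc: "x \<in> carrier G" using x Fcar by auto
        show "\<one>\<^bsub>G\<^esub> \<otimes>\<^bsub>G\<^esub> x \<otimes>\<^bsub>G\<^esub> inv\<^bsub>G\<^esub> \<one>\<^bsub>G\<^esub> \<in> F" using x xc by simp
        show "inv\<^bsub>G\<^esub> \<one>\<^bsub>G\<^esub> \<otimes>\<^bsub>G\<^esub> x \<otimes>\<^bsub>G\<^esub> \<one>\<^bsub>G\<^esub> \<in> F" using x xc by simp
      qed
    next
      fix a assume a: "a \<in> N"
      have ac: "a \<in> carrier G" using Nc a by auto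
      show "inv\<^bsub>G\<^esub> a \<in> N"
      proof (rule NI)
        show "inv\<^bsub>G\<^esub> a \<in> E" using subgroup.m_inv_closed[OF sE NE[OF a]] .
        show "inv\<^bsub>G\<^esub> a \<in> carrier G" using ac by simp
        fix x assume x: "x \<in> F"
        show "inv\<^bsub>G\<^esub> a \<otimes>\<^bsub>G\<^esub> x \<otimes>\<^bsub>G\<^esub> inv\<^bsub>G\<^esub> (inv\<^bsub>G\<^esub> a) \<in> F" using N2[OF a x] ac by simp
        show "inv\<^bsub>G\<^esub> (inv\<^bsub>G\<^esub> a) \<otimes>\<^bsub>G\<^esub> x \<otimes>\<^bsub>G\<^esub> inv\<^bsub>G\<^esub> a \<in> F" using N1[OF a x] ac by simp
      qed
    qed
    have FN: "F \<subseteq> N"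
    proof
      fix f assume f: "f \<in> F"
      have fc: "f \<in> carrier G" using f Fcar by auto
      show "f \<in> N"
      proof (rule NI)
        show "f \<in> E" using f FE by auto
        show "f \<in> carrier G" by (rule fc)
        fix x assume x: "x \<in> F"
        show "f \<otimes>\<^bsub>G\<^esub> x \<otimes>\<^bsub>G\<^esub> inv\<^bsub>G\<^esub> f \<in> F"
          by (intro subgroup.m_closed[OF sF] subgroup.m_inv_closed[OF sF] f x)
        show "inv\<^bsub>G\<^esub> f \<otimes>\<^bsub>G\<^esub> x \<otimes>\<^bsub>G\<^esub> f \<in> F"
          by (intro subgroup.m_closed[OF sF] subgroup.m_inv_closed[OF sF] f x)
      qed
    qed
    have grpN: "group (G\<lparr>carrier := N\<rparr>)" using G.subgroup_imp_group[OF sN] .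
    have nFN: "F \<lhd> G\<lparr>carrier := N\<rparr>"
      unfolding group.normal_inv_iff[OF grpN]
    proof (intro conjI ballI)
      show "subgroup F (G\<lparr>carrier := N\<rparr>)" by (rule G.subgroup_incl[OF sF sN FN])
      fix x h assume x: "x \<in> carrier (G\<lparr>carrier := N\<rparr>)" and h: "h \<in> F"
      have xN: "x \<in> N" using x by simp
      show "x \<otimes>\<^bsub>G\<lparr>carrier := N\<rparr>\<^esub> h \<otimes>\<^bsub>G\<lparr>carrier := N\<rparr>\<^esub> inv\<^bsub>G\<lparr>carrier := N\<rparr>\<^esub> x \<in> F"
        using N1[OF xN h] G.m_inv_consistent[OF sN xN] by simp
    qed
    define Q where "Q = G\<lparr>carrier := N\<rparr> Mod F"
    have grpQ: "group Q" unfolding Q_def by (rule normal.factorgroup_is_group[OF nFN])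
    have qsQ: "quasi_solvable Q" unfolding Q_def N_def by (rule assms(7)[OF FD])
    have oneQ: "\<one>\<^bsub>Q\<^esub> = F" unfolding Q_def FactGroup_def by simp
    have rhom: "(\<lambda>a. F #>\<^bsub>G\<lparr>carrier := N\<rparr>\<^esub> a) \<in> hom (G\<lparr>carrier := N\<rparr>) Q"
      unfolding Q_def by (rule normal.r_coset_hom_Mod[OF nFN])
    have rcos_eq: "\<And>a. F #>\<^bsub>G\<lparr>carrier := N\<rparr>\<^esub> a = F #>\<^bsub>G\<^esub> a" unfolding r_coset_def by simp
    have claim1: "h \<otimes>\<^bsub>G\<^esub> d \<otimes>\<^bsub>G\<^esub> inv\<^bsub>G\<^esub> h \<in> F" if h: "h \<in> H" and d: "d \<in> D" for h d
    proof -
      have hc: "h \<in> carrier G" using h Hcar by auto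
      have onP: "h \<otimes>\<^bsub>G\<^esub> x \<otimes>\<^bsub>G\<^esub> inv\<^bsub>G\<^esub> h \<in> F" if x: "x \<in> \<Union>PP" for x
      proof -
        obtain P where P: "P \<in> PP" "x \<in> P" using x by (rule UnionE)
        have perfP: "perfect_subgroup G P" and fgP: "fin_gen_subgroup G P" using PP(1) P(1) by auto
        have sP: "subgroup P G" using perfP unfolding perfect_subgroup_def by simp
        have PD: "P \<subseteq> D" unfolding PP(2) using P(1) by (auto intro: generate.incl)
        define c where "c = (\<lambda>y. h \<otimes>\<^bsub>G\<^esub> y \<otimes>\<^bsub>G\<^esub> inv\<^bsub>G\<^esub> h)"
        have cN: "c y \<in> N" if y: "y \<in> P" for y
        proof -
          have yD: "y \<in> D" using y PD by auto
          have yH: "y \<in> H" using yD DH by auto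
          have "c y \<in> H" unfolding c_def
            by (intro subgroup.m_closed[OF sH] subgroup.m_inv_closed[OF sH] h yH)
          moreover have "c y \<in> E" unfolding c_def using conjE[OF hc] yD assms(3) by auto
          ultimately show ?thesis using KN' unfolding K_def by auto
        qed
        have chom: "c \<in> hom (G\<lparr>carrier := P\<rparr>) (G\<lparr>carrier := N\<rparr>)"
          unfolding hom_def
        proof (intro CollectI conjI)
          show "c \<in> carrier (G\<lparr>carrier := P\<rparr>) \<rightarrow> carrier (G\<lparr>carrier := N\<rparr>)" using cN by auto
          show "\<forall>x\<in>carrier (G\<lparr>carrier := P\<rparr>). \<forall>y\<in>carrier (G\<lparr>carrier := P\<rparr>).
              c (x \<otimes>\<^bsub>G\<lparr>carrier := P\<rparr>\<^esub> y) = c x \<otimes>\<^bsub>G\<lparr>carrier := N\<rparr>\<^esub> c y"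
            using conj_mult_alg[OF assms(1) hc] subgroup.subset[OF sP] unfolding c_def by auto
        qed
        have fhom: "(\<lambda>y. F #>\<^bsub>G\<lparr>carrier := N\<rparr>\<^esub> c y) \<in> hom (G\<lparr>carrier := P\<rparr>) Q"
          using hom_compose[OF chom rhom] by (simp add: comp_def)
        have "F #>\<^bsub>G\<lparr>carrier := N\<rparr>\<^esub> c x = \<one>\<^bsub>Q\<^esub>"
          by (rule perfect_to_quasi_solvable_trivial[OF assms(1) grpQ qsQ perfP fgP fhom P(2)])
        then have eq: "F #>\<^bsub>G\<^esub> c x = F" using rcos_eq oneQ by simp
        have cxc: "c x \<in> carrier G" using cN[OF P(2)] Nc by auto
        have "c x \<in> F #>\<^bsub>G\<^esub> c x" by (rule G.rcos_self[OF cxc sF])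
        then show ?thesis using eq unfolding c_def by simp
      qed
      have dg: "d \<in> generate G (\<Union>PP)" using d PP(2) by simp
      show ?thesis by (rule G.conj_generate[OF UPcar hc sF _ dg]) (rule onP)
    qed
    have claim2: "h \<otimes>\<^bsub>G\<^esub> x \<otimes>\<^bsub>G\<^esub> inv\<^bsub>G\<^esub> h \<in> F" if h: "h \<in> H" and x: "x \<in> F" for h x
    proof -
      have hc: "h \<in> carrier G" using h Hcar by auto
      define XS where "XS = {inv\<^bsub>G\<^esub> y \<otimes>\<^bsub>G\<^esub> d \<otimes>\<^bsub>G\<^esub> y | d y. d \<in> D \<and> y \<in> K}"
      have Fgen: "F = generate G XS" unfolding F_def conj_gen_def XS_def by simp
      have Xcar: "XS \<subseteq> carrier G" unfolding XS_def using Dcar Kcar by (auto intro!: G.m_closed G.inv_closed)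
      have gen: "h \<otimes>\<^bsub>G\<^esub> z \<otimes>\<^bsub>G\<^esub> inv\<^bsub>G\<^esub> h \<in> F" if z: "z \<in> XS" for z
      proof -
        obtain d k where dk: "z = inv\<^bsub>G\<^esub> k \<otimes>\<^bsub>G\<^esub> d \<otimes>\<^bsub>G\<^esub> k" "d \<in> D" "k \<in> K" using z unfolding XS_def by blast
        have kc: "k \<in> carrier G" using dk(3) Kcar by auto
        have dc: "d \<in> carrier G" using dk(2) Dcar by auto
        define k' where "k' = h \<otimes>\<^bsub>G\<^esub> k \<otimes>\<^bsub>G\<^esub> inv\<^bsub>G\<^esub> h"
        have "k' \<in> H" unfolding k'_def
          using dk(3) unfolding K_def
          by (intro subgroup.m_closed[OF sH] subgroup.m_inv_closed[OF sH] h) auto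
        moreover have "k' \<in> E" unfolding k'_def using conjE[OF hc] dk(3) unfolding K_def by auto
        ultimately have k'N: "k' \<in> N" using KN' unfolding K_def by auto
        have "inv\<^bsub>G\<^esub> k' \<otimes>\<^bsub>G\<^esub> (h \<otimes>\<^bsub>G\<^esub> d \<otimes>\<^bsub>G\<^esub> inv\<^bsub>G\<^esub> h) \<otimes>\<^bsub>G\<^esub> k' \<in> F" using N2[OF k'N claim1[OF h dk(2)]] .
        then show ?thesis using conj_alg[OF assms(1) hc kc dc] dk(1) unfolding k'_def by simp
      qed
      have xg: "x \<in> generate G XS" using x Fgen by simp
      show ?thesis by (rule G.conj_generate[OF Xcar hc sF _ xg]) (rule gen)
    qed
    have Nfull: "H \<subseteq> normaliser_in G (carrier G) F"
    proof
      fix h assume h: "h \<in> H"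
      have hc: "h \<in> carrier G" using h Hcar by auto
      have ih: "inv\<^bsub>G\<^esub> h \<in> H" using subgroup.m_inv_closed[OF sH h] .
      have "h <#\<^bsub>G\<^esub> F #>\<^bsub>G\<^esub> inv\<^bsub>G\<^esub> h = F"
        using G.norm_iff[OF Fcar hc] claim2[OF h] claim2[OF ih] hc by simp
      then show "h \<in> normaliser_in G (carrier G) F" unfolding normaliser_in_def using hc by simp
    qed
    have DHeq: "conj_gen G D H = F"
    proof
      show "conj_gen G D H \<subseteq> F" unfolding conj_gen_def
      proof (rule G.generate_subgroup_incl[OF _ sF])
        show "{inv\<^bsub>G\<^esub> y \<otimes>\<^bsub>G\<^esub> x \<otimes>\<^bsub>G\<^esub> y |x y. x \<in> D \<and> y \<in> H} \<subseteq> F"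
        proof
          fix z assume "z \<in> {inv\<^bsub>G\<^esub> y \<otimes>\<^bsub>G\<^esub> x \<otimes>\<^bsub>G\<^esub> y |x y. x \<in> D \<and> y \<in> H}"
          then obtain x y where z: "z = inv\<^bsub>G\<^esub> y \<otimes>\<^bsub>G\<^esub> x \<otimes>\<^bsub>G\<^esub> y" "x \<in> D" "y \<in> H" by blast
          have yc: "y \<in> carrier G" using z(3) Hcar by auto
          show "z \<in> F" using claim1[OF subgroup.m_inv_closed[OF sH z(3)] z(2)] z(1) yc by simp
        qed
      qed
      show "F \<subseteq> conj_gen G D H" unfolding F_def conj_gen_def
        by (rule G.mono_generate) (auto simp: K_def)
    qed
    show ?thesis using FD Nfull DHeq by simp
  qed
  show ?thesis
  proof
    show "sandwich_classification G D (carrier G)"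
      unfolding sandwich_classification_def
    proof
      fix H assume H: "H \<in> sub_lattice G D (carrier G)"
      show "D_full G D (carrier G) (conj_gen G D H) \<and> H \<subseteq> normaliser_in G (carrier G) (conj_gen G D H)"
        using key[OF H] full_mono by blast
    qed
    show "{F. D_full G D (carrier G) F} = {F. D_full G D E F}"
    proof (intro equalityI subsetI)
      fix Z assume "Z \<in> {F. D_full G D (carrier G) F}"
      then have Z: "D_full G D (carrier G) Z" by simp
      have "Z \<subseteq> E" by (rule full_E[OF Z])
      then show "Z \<in> {F. D_full G D E F}" using Z unfolding D_full_def sub_lattice_def by simp
    next
      fix Z assume "Z \<in> {F. D_full G D E F}"
      then show "Z \<in> {F. D_full G D (carrier G) F}" using full_mono by simp
    qed
  qed
qed

end
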